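(* Let $a>0$ and $k\in\mathbb{N}^*$. For all $m\in\{0,\dots,k-1\}$ and $\ell\in\{0,\dots,k-1\}$, $$\frac{1}{n^m}\frac{d^m}{dx^m}\Big(F_{n,\ell}(a;x)-F_{n,\ell+1}(a;x)\Big)\Big|_{x=a}\xrightarrow[n\to\infty]{}(-1)^\ell\binom m\ell,$$ with $\binom m\ell=0$ when $\ell>m$.
   Context: $f(y)=e^{-y}\mathbb 1_{y\ge0}$, $F(y)=(1-e^{-y})\mathbb 1_{y\ge0}$, $f(y;x)=\frac{f(y)}{1-F(x)}\mathbb 1_{y\ge x}$, $F(y;x)=\frac{F(y)-F(x)}{1-F(x)}\mathbb 1_{y\ge x}$, $f_{n,\ell}(y;x)=\ell\binom n\ell F(y;x)^{\ell-1}f(y;x)(1-F(y;x))^{n-\ell}$ (density of the $\ell$-th order statistic of $n$ i.i.d. variables with law $\mathcal{E}(1)$ conditioned on exceeding $x$), $F_{n,\ell}(y;x)=\int_x^y f_{n,\ell}(z;x)dz$ for $\ell\ge1$, and $F_{n,0}(y;x)=\mathbb 1_{y\ge x}$. Derivatives in $x$ at $x=a$ are left derivatives. *)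

theory Defs
  imports "HOL-Analysis.Analysis"
begin

definition expf :: "real \<Rightarrow> real" where
  "expf y = (if y \<ge> 0 then exp (- y) else 0)"

definition expF :: "real \<Rightarrow> real" where
  "expF y = (if y \<ge> 0 then 1 - exp (- y) else 0)"

definition condf :: "real \<Rightarrow> real \<Rightarrow> real" where
  "condf y x = (if y \<ge> x then expf y / (1 - expF x) else 0)"

definition condF :: "real \<Rightarrow> real \<Rightarrow> real" where
  "condF y x = (if y \<ge> x then (expF y - expF x) / (1 - expF x) else 0)"

definition osf :: "nat \<Rightarrow> nat \<Rightarrow> real \<Rightarrow> real \<Rightarrow> real" where
  "osf n l y x = real l * real (n choose l) * condF y x ^ (l - 1) * condf y x
                 * (1 - condF y x) ^ (n - l)"

definition osF :: "nat \<Rightarrow> nat \<Rightarrow> real \<Rightarrow> real \<Rightarrow> real" where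
  "osF n l y x = (if l = 0 then (if y \<ge> x then 1 else 0)
                  else integral {x..y} (\<lambda>z. osf n l z x))"

fun left_deriv_n :: "nat \<Rightarrow> (real \<Rightarrow> real) \<Rightarrow> real \<Rightarrow> real" where
  "left_deriv_n 0 f = f"
| "left_deriv_n (Suc m) f =
     (\<lambda>x. THE D. (left_deriv_n m f has_real_derivative D) (at x within {..x}))"

end

theory Submission
  imports Defs
begin


lemma nb: "at (x::real) within {..x} \<noteq> bot"
proof -
  have "at x within {..<x} \<noteq> bot" using trivial_limit_at_left_real by simp
  moreover have "at x within {..<x} \<le> at x within {..x}" by (intro at_le) auto
  ultimately show ?thesis using bot_unique by metis
qed

definition psi :: "real \<Rightarrow> nat \<Rightarrow> nat \<Rightarrow> real \<Rightarrow> real" where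
  "psi a n j x = (exp (a - x) - 1) ^ j * exp (real n * (x - a))"

lemma psi_deriv: "(psi a n j has_real_derivative
   ((real n - real j) * psi a n j x - real j * psi a n (j - 1) x)) (at x)"
proof (cases j)
  case 0
  show ?thesis unfolding psi_def 0
    by (auto intro!: derivative_eq_intros simp: algebra_simps)
next
  case (Suc i)
  show ?thesis unfolding psi_def Suc
    apply (rule derivative_eq_intros refl | simp)+
    apply (simp add: algebra_simps)
    done
qed

definition Psi :: "real \<Rightarrow> nat \<Rightarrow> nat \<Rightarrow> (nat \<Rightarrow> real) \<Rightarrow> real \<Rightarrow> real" where
  "Psi a n l c x = (\<Sum>j\<le>l. c j * psi a n j x)"

definition opc :: "nat \<Rightarrow> nat \<Rightarrow> (nat \<Rightarrow> real) \<Rightarrow> nat \<Rightarrow> real" where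
  "opc n l c j = (real n - real j) * c j - (if j < l then real (j+1) * c (j+1) else 0)"

lemma shift_sum: "(\<Sum>j\<le>l. c j * (real j * psi a n (j - 1) x)) =
   (\<Sum>j<l. real (j+1) * c (j+1) * psi a n j x)"
  by (induction l) (auto simp: algebra_simps)

lemma Psi_deriv: "(Psi a n l c has_real_derivative Psi a n l (opc n l c) x) (at x)"
proof -
  have "((\<lambda>x. \<Sum>j\<le>l. c j * psi a n j x) has_real_derivative
     (\<Sum>j\<le>l. c j * ((real n - real j) * psi a n j x - real j * psi a n (j - 1) x))) (at x)"
    by (intro DERIV_sum DERIV_cmult psi_deriv)
  moreover have "(\<Sum>j\<le>l. c j * ((real n - real j) * psi a n j x - real j * psi a n (j - 1) x))
     = Psi a n l (opc n l c) x"
  proof -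
    have "(\<Sum>j\<le>l. c j * ((real n - real j) * psi a n j x - real j * psi a n (j - 1) x))
       = (\<Sum>j\<le>l. (real n - real j) * c j * psi a n j x) - (\<Sum>j\<le>l. c j * (real j * psi a n (j - 1) x))"
      unfolding sum_subtractf[symmetric] by (rule sum.cong) (auto simp: algebra_simps)
    also have "\<dots> = (\<Sum>j\<le>l. (real n - real j) * c j * psi a n j x) - (\<Sum>j<l. real (j+1) * c (j+1) * psi a n j x)"
      by (subst shift_sum) (rule refl)
    also have "(\<Sum>j<l. real (j+1) * c (j+1) * psi a n j x) = (\<Sum>j\<le>l. (if j < l then real (j+1) * c (j+1) else 0) * psi a n j x)"
      by (rule sum.mono_neutral_cong_left) auto
    also have "(\<Sum>j\<le>l. (real n - real j) * c j * psi a n j x) - (\<Sum>j\<le>l. (if j < l then real (j+1) * c (j+1) else 0) * psi a n j x)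
       = Psi a n l (opc n l c) x"
      unfolding Psi_def opc_def sum_subtractf[symmetric] by (rule sum.cong) (auto simp: algebra_simps)
    finally show ?thesis .
  qed
  ultimately show ?thesis unfolding Psi_def[abs_def] by simp
qed

lemma left_deriv_Psi: "left_deriv_n m (Psi a n l c) = Psi a n l ((opc n l ^^ m) c)"
proof (induction m)
  case 0 then show ?case by simp
next
  case (Suc m)
  show ?case
  proof
    fix x
    show "left_deriv_n (Suc m) (Psi a n l c) x = Psi a n l ((opc n l ^^ Suc m) c) x"
      unfolding left_deriv_n.simps Suc
      apply (rule the_equality)
       apply (simp, rule has_field_derivative_at_within, rule Psi_deriv)
      apply (rule has_field_derivative_unique[OF _ _ nb], assumption)
      apply (simp, rule has_field_derivative_at_within, rule Psi_deriv)
      done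
  qed
qed

lemma left_deriv_local:
  assumes "b < a" "\<And>y. y \<in> {b<..a} \<Longrightarrow> f y = g y"
  shows "y \<in> {b<..a} \<Longrightarrow> left_deriv_n m f y = left_deriv_n m g y"
proof (induction m arbitrary: y)
  case 0 then show ?case using assms by simp
next
  case (Suc m)
  have "\<And>D. (left_deriv_n m f has_real_derivative D) (at y within {..y}) \<longleftrightarrow>
             (left_deriv_n m g has_real_derivative D) (at y within {..y})"
  proof
    fix D
    assume "(left_deriv_n m f has_real_derivative D) (at y within {..y})"
    then show "(left_deriv_n m g has_real_derivative D) (at y within {..y})"
      apply (rule has_field_derivative_transform_within[where d="y - b"])
      using Suc by (auto simp: dist_real_def)
  next
    fix D
    assume "(left_deriv_n m g has_real_derivative D) (at y within {..y})"
    then show "(left_deriv_n m f has_real_derivative D) (at y within {..y})"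
      apply (rule has_field_derivative_transform_within[where d="y - b"])
      using Suc by (auto simp: dist_real_def)
  qed
  then show ?case by simp
qed



definition cn :: "nat \<Rightarrow> nat \<Rightarrow> nat \<Rightarrow> real" where
  "cn n l = (\<lambda>j. if j = l then real (n choose l) else 0)"

definition vv :: "nat \<Rightarrow> nat \<Rightarrow> nat \<Rightarrow> nat \<Rightarrow> real" where
  "vv l n m j = (opc n l ^^ m) (cn n l) j / (real (n choose j) * real n ^ m)"

lemma binom_rel: "j < n \<Longrightarrow> real (j+1) * real (n choose (j+1)) = (real n - real j) * real (n choose j)"
proof -
  assume "j < n"
  have "Suc j * (n choose Suc j) = (n - j) * (n choose j)"
    using binomial_absorption binomial_absorb_comp by metis
  then have "real (Suc j * (n choose Suc j)) = real ((n - j) * (n choose j))" by simp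
  then show ?thesis using \<open>j < n\<close> by (simp add: of_nat_diff algebra_simps)
qed

lemma vv_step:
  assumes "l < n" "j \<le> l"
  shows "vv l n (Suc m) j = (1 - real j / real n) * vv l n m j
     - (if j < l then (1 - real j / real n) * vv l n m (j+1) else 0)"
proof -
  let ?w = "(opc n l ^^ m) (cn n l)"
  have pos: "real (n choose j) > 0" "real (n choose (j+1)) > 0" using assms by auto
  have np: "real n > 0" using assms by simp
  have "vv l n (Suc m) j = ((real n - real j) * ?w j - (if j < l then real (j+1) * ?w (j+1) else 0))
           / (real (n choose j) * real n ^ Suc m)"
    unfolding vv_def by (simp add: opc_def)
  also have "\<dots> = (1 - real j / real n) * vv l n m j
     - (if j < l then (1 - real j / real n) * vv l n m (j+1) else 0)"
  proof (cases "j < l")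
    case True
    have br: "real (j+1) * real (n choose (j+1)) = (real n - real j) * real (n choose j)"
      using binom_rel assms True by simp
    have e1: "(real n - real j) * ?w j / (real (n choose j) * real n ^ Suc m)
        = (1 - real j / real n) * vv l n m j"
      unfolding vv_def using pos np by (simp add: field_simps)
    have "real (j+1) * ?w (j+1) / (real (n choose j) * real n ^ Suc m)
        = real (j+1) * real (n choose (j+1)) * (?w (j+1) / (real (n choose (j+1)) * real n ^ m)) / (real (n choose j) * real n)"
      using pos np by (simp add: field_simps)
    also have "\<dots> = (real n - real j) * real (n choose j) * vv l n m (j+1) / (real (n choose j) * real n)"
      unfolding br vv_def by simp
    also have "\<dots> = (1 - real j / real n) * vv l n m (j+1)"
      using pos np by (simp add: field_simps)
    finally have e2: "real (j+1) * ?w (j+1) / (real (n choose j) * real n ^ Suc m) = (1 - real j / real n) * vv l n m (j+1)" .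
    show ?thesis using True e1 e2 by (simp add: diff_divide_distrib)
  next
    case False
    then show ?thesis unfolding vv_def using pos np by (simp add: field_simps)
  qed
  finally show ?thesis .
qed

lemma vv_lim: "j \<le> l \<Longrightarrow> (\<lambda>n. vv l n m j) \<longlonglongrightarrow> (-1) ^ (l - j) * real (m choose (l - j))"
proof (induction m arbitrary: j)
  case 0
  have "eventually (\<lambda>n. vv l n 0 j = (-1) ^ (l - j) * real (0 choose (l - j))) sequentially"
    using eventually_ge_at_top[of l]
    by eventually_elim (use 0 in \<open>auto simp: vv_def cn_def\<close>)
  then show ?case by (rule tendsto_eventually)
next
  case (Suc m)
  have ev: "eventually (\<lambda>n. vv l n (Suc m) j = (1 - real j / real n) * vv l n m j
     - (if j < l then (1 - real j / real n) * vv l n m (j+1) else 0)) sequentially"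
    using eventually_gt_at_top[of l]
    by eventually_elim (rule vv_step[OF _ Suc.prems])
  have t1: "(\<lambda>n. 1 - real j / real n) \<longlonglongrightarrow> 1"
    using tendsto_diff[OF tendsto_const lim_const_over_n[of "real j"]] by simp
  show ?case
  proof (cases "j < l")
    case True
    have "(\<lambda>n. (1 - real j / real n) * vv l n m j - (1 - real j / real n) * vv l n m (j+1))
       \<longlonglongrightarrow> 1 * ((-1) ^ (l - j) * real (m choose (l - j))) - 1 * ((-1) ^ (l - (j+1)) * real (m choose (l - (j+1))))"
      by (intro tendsto_intros t1 Suc.IH) (use True in auto)
    moreover obtain t where t: "l - j = Suc t" using True by (metis Suc_diff_Suc)
    moreover have "l - (j+1) = t" using t by simp
    ultimately have eq: "1 * ((-1) ^ (l - j) * real (m choose (l - j))) - 1 * ((-1) ^ (l - (j+1)) * real (m choose (l - (j+1))))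
      = (-1) ^ (l - j) * real (Suc m choose (l - j))"
      by (simp add: algebra_simps)
    have "(\<lambda>n. (1 - real j / real n) * vv l n m j - (1 - real j / real n) * vv l n m (j+1))
       \<longlonglongrightarrow> (-1) ^ (l - j) * real (Suc m choose (l - j))"
      by (subst eq[symmetric]) (intro tendsto_intros t1 Suc.IH, use True in auto)
    then show ?thesis
      by (rule Lim_transform_eventually) (use ev True in \<open>auto elim!: eventually_mono\<close>)
  next
    case False
    then have "j = l" using Suc.prems by simp
    have "(\<lambda>n. (1 - real j / real n) * vv l n m j) \<longlonglongrightarrow> 1 * ((-1) ^ (l - j) * real (m choose (l - j)))"
      by (intro tendsto_intros t1 Suc.IH) (use Suc.prems in auto)
    then have "(\<lambda>n. (1 - real j / real n) * vv l n m j) \<longlonglongrightarrow> (-1) ^ (l - j) * real (Suc m choose (l - j))"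
      using \<open>j = l\<close> by simp
    then show ?thesis
      by (rule Lim_transform_eventually) (use ev False in \<open>auto elim!: eventually_mono\<close>)
  qed
qed



definition gg :: "real \<Rightarrow> nat \<Rightarrow> nat \<Rightarrow> real \<Rightarrow> real" where
  "gg x n j z = real j * real (n choose j) * (1 - exp (x - z)) ^ (j - 1) * exp (x - z) * exp (x - z) ^ (n - j)"

lemma osF_int: "x \<le> a \<Longrightarrow> osF n j a x = (if j = 0 then 1 else 0) + integral {x..a} (\<lambda>z. osf n j z x)"
  unfolding osF_def by (simp add: osf_def)

lemma condF_eq: "0 \<le> x \<Longrightarrow> x \<le> z \<Longrightarrow> condF z x = 1 - exp (x - z)"
proof -
  assume h: "0 \<le> x" "x \<le> z"
  have "condF z x = (exp (-x) - exp (-z)) / exp (-x)"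
    using h unfolding condF_def expF_def by simp
  also have "\<dots> = 1 - exp (-z) / exp (-x)" by (simp add: diff_divide_distrib)
  also have "exp (-z) / exp (-x) = exp (x - z)" by (simp add: exp_diff[symmetric])
  finally show ?thesis .
qed

lemma condf_eq: "0 \<le> x \<Longrightarrow> x \<le> z \<Longrightarrow> condf z x = exp (x - z)"
proof -
  assume h: "0 \<le> x" "x \<le> z"
  have "condf z x = exp (-z) / exp (-x)"
    using h unfolding condf_def expf_def expF_def by simp
  also have "exp (-z) / exp (-x) = exp (x - z)" by (simp add: exp_diff[symmetric])
  finally show ?thesis .
qed

lemma osf_eq: "0 \<le> x \<Longrightarrow> x \<le> z \<Longrightarrow> osf n j z x = gg x n j z"
  unfolding osf_def gg_def by (simp add: condF_eq condf_eq)

lemma gg_int: "gg x n j integrable_on {x..a}"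
  unfolding gg_def by (intro integrable_continuous_interval continuous_intros)

lemma osf_int: "0 \<le> x \<Longrightarrow> (\<lambda>z. osf n j z x) integrable_on {x..a}"
  using gg_int[of x n j a] integrable_cong[of "{x..a}" "\<lambda>z. osf n j z x" "gg x n j"] osf_eq by auto

definition HH :: "real \<Rightarrow> nat \<Rightarrow> nat \<Rightarrow> real \<Rightarrow> real" where
  "HH x n l z = real (n choose l) * (1 - exp (x - z)) ^ l * exp (x - z) ^ (n - l)"

lemma HH_deriv: "(HH x n l has_real_derivative (gg x n l z - gg x n (l+1) z)) (at z)"
proof -
  have "(HH x n l has_real_derivative
      real (n choose l) * (real l * (1 - exp (x - z)) ^ (l - 1) * exp (x - z) * exp (x - z) ^ (n - l)
      - (1 - exp (x - z)) ^ l * (real (n - l) * exp (x - z) ^ (n - l - 1) * exp (x - z)))) (at z)"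
    unfolding HH_def
    by (rule derivative_eq_intros refl | simp)+ (simp add: algebra_simps)
  moreover have "real (n choose l) * (real l * (1 - exp (x - z)) ^ (l - 1) * exp (x - z) * exp (x - z) ^ (n - l)
      - (1 - exp (x - z)) ^ l * (real (n - l) * exp (x - z) ^ (n - l - 1) * exp (x - z)))
     = gg x n l z - gg x n (l+1) z"
  proof -
    have b: "real (Suc l) * real (n choose Suc l) = real (n - l) * real (n choose l)"
    proof -
      have "Suc l * (n choose Suc l) = (n - l) * (n choose l)"
        using binomial_absorption binomial_absorb_comp by metis
      then show ?thesis by (metis of_nat_mult)
    qed
    have "gg x n (l+1) z = real (Suc l) * real (n choose Suc l) * (1 - exp (x - z)) ^ l * exp (x - z) * exp (x - z) ^ (n - l - 1)"
      unfolding gg_def by simp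
    also have "\<dots> = real (n - l) * real (n choose l) * (1 - exp (x - z)) ^ l * exp (x - z) * exp (x - z) ^ (n - l - 1)"
      using b by simp
    finally show ?thesis unfolding gg_def by (simp add: algebra_simps)
  qed
  ultimately show ?thesis by simp
qed

lemma diff_int: "0 \<le> x \<Longrightarrow> x \<le> a \<Longrightarrow>
   integral {x..a} (\<lambda>z. osf n l z x - osf n (l+1) z x) = HH x n l a - HH x n l x"
proof -
  assume h: "0 \<le> x" "x \<le> a"
  have "((\<lambda>z. gg x n l z - gg x n (l+1) z) has_integral (HH x n l a - HH x n l x)) {x..a}"
    apply (rule fundamental_theorem_of_calculus[OF h(2)])
    apply (rule has_real_derivative_iff_has_vector_derivative[THEN iffD1, OF has_field_derivative_at_within[OF HH_deriv]])
    done
  then have "integral {x..a} (\<lambda>z. gg x n l z - gg x n (l+1) z) = HH x n l a - HH x n l x"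
    by (rule integral_unique)
  moreover have "integral {x..a} (\<lambda>z. osf n l z x - osf n (l+1) z x) = integral {x..a} (\<lambda>z. gg x n l z - gg x n (l+1) z)"
    by (rule integral_cong) (use h in \<open>simp add: osf_eq\<close>)
  ultimately show ?thesis by simp
qed

lemma osF_diff: "0 \<le> x \<Longrightarrow> x \<le> a \<Longrightarrow>
   osF n l a x - osF n (l+1) a x = real (n choose l) * psi a n l x"
proof -
  assume h: "0 \<le> x" "x \<le> a"
  have "osF n l a x - osF n (l+1) a x = (if l = 0 then 1 else 0)
      + (integral {x..a} (\<lambda>z. osf n l z x) - integral {x..a} (\<lambda>z. osf n (l+1) z x))"
    using h by (simp add: osF_int)
  also have "integral {x..a} (\<lambda>z. osf n l z x) - integral {x..a} (\<lambda>z. osf n (l+1) z x)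
     = integral {x..a} (\<lambda>z. osf n l z x - osf n (l+1) z x)"
    by (rule integral_diff[symmetric]) (use h osf_int in auto)
  also have "\<dots> = HH x n l a - HH x n l x" using diff_int h by simp
  also have "HH x n l x = (if l = 0 then 1 else 0)" unfolding HH_def by simp
  finally have 1: "osF n l a x - osF n (l+1) a x = HH x n l a" by simp
  show ?thesis
  proof (cases "l \<le> n")
    case True
    have "(1 - exp (x - a)) = (exp (a - x) - 1) * exp (x - a)"
      by (simp add: algebra_simps exp_add[symmetric])
    then have "(1 - exp (x - a)) ^ l * exp (x - a) ^ (n - l) = (exp (a - x) - 1) ^ l * (exp (x - a) ^ l * exp (x - a) ^ (n - l))"
      by (simp add: power_mult_distrib)
    also have "exp (x - a) ^ l * exp (x - a) ^ (n - l) = exp (real n * (x - a))"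
      using True by (simp add: power_add[symmetric] exp_of_nat_mult)
    finally show ?thesis using 1 unfolding HH_def psi_def by simp
  next
    case False
    then show ?thesis using 1 unfolding HH_def by simp
  qed
qed



lemma Psi_cn: "Psi a n l (cn n l) x = real (n choose l) * psi a n l x"
proof -
  have "Psi a n l (cn n l) x = (\<Sum>j\<le>l. if j = l then real (n choose l) * psi a n l x else 0)"
    unfolding Psi_def cn_def by (rule sum.cong) auto
  then show ?thesis by simp
qed

lemma Psi_at_a: "Psi a n l c a = c 0"
  unfolding Psi_def psi_def by (induction l) auto

theorem mainTheorem8:
  fixes a :: real and k m l :: nat
  assumes "a > 0" and "k \<ge> 1" and "m < k" and "l < k"
  shows "(\<lambda>n. (1 / real n ^ m) *
            left_deriv_n m (\<lambda>x. osF n l a x - osF n (l + 1) a x) a)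
         \<longlonglongrightarrow> (-1) ^ l * real (m choose l)"
proof -
  have "(\<lambda>n. (1 / real n ^ m) *
            left_deriv_n m (\<lambda>x. osF n l a x - osF n (l + 1) a x) a) = (\<lambda>n. vv l n m 0)"
  proof
    fix n
    have "left_deriv_n m (\<lambda>x. osF n l a x - osF n (l + 1) a x) a
        = left_deriv_n m (Psi a n l (cn n l)) a"
      by (rule left_deriv_local[OF assms(1)]) (use assms(1) osF_diff[of _ a n l] in \<open>auto simp: Psi_cn\<close>)
    also have "\<dots> = (opc n l ^^ m) (cn n l) 0"
      by (simp add: left_deriv_Psi Psi_at_a)
    finally show "(1 / real n ^ m) *
            left_deriv_n m (\<lambda>x. osF n l a x - osF n (l + 1) a x) a = vv l n m 0"
      unfolding vv_def by simp
  qed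
  then show ?thesis using vv_lim[of 0 l m] by simp
qed

end
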